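(* Let $M>0$, $L,N\in\mathbb N$, $B\ge1$, $F\ge1$, $S>0$, let $\mathcal G=\mathcal F^{(M)}_{2d+1}(L,N,B,F,S)$ and $\boldsymbol G=\{\Psi_\psi:\psi\in\mathcal G\}$. Then (i) $\Psi(x)=0$ for every $\Psi\in\boldsymbol G$ and every $x\in\mathcal H$ with $\|x\|_\infty>M$; and (ii) $(\boldsymbol G,\|\cdot\|_\infty)$ is compact.
   Context: $D=[0,1]^d$, $\mathcal H=L^2(D)$; $\|x\|_\infty$ is the (essential) sup of $|x|$ on $D$; for $\Psi:\mathcal H\to\mathcal H$, $\|\Psi\|_\infty=\sup_{x}\|\Psi(x)\|_{\mathcal H}$; for a function $f$, $\|f\|_\infty$ is its sup norm. A ReLU network with architecture $(L,\mathbf p)$, $\mathbf p=(p_0,\dots,p_{L+1})$, is $f=A_{L+1}\circ\sigma\circ A_L\circ\cdots\circ\sigma\circ A_1$ with affine maps $A_l(x)=W_lx+b_l$, $A_l:\mathbb R^{p_{l-1}}\to\mathbb R^{p_l}$, and $\sigma(z)=\max\{z,0\}$ applied componentwise; $\theta(f)$ is the vector of all entries of all $W_l,b_l$; depth $L$, width $\max_{1\le l\le L}p_l$. $\mathcal F^{(M)}_{2d+1}(L,N,B,F,S)$ is the set of functions $f\mathbf 1_{D\times D\times[-M,M]}$ with $f:\mathbb R^{2d+1}\to\mathbb R$ a ReLU network of depth $\le L$, width $\le N$, $|\theta(f)|_\infty\le B$, number of nonzero parameters $|\theta(f)|_0\le S$, and $\|f\mathbf 1_{D\times D\times[-M,M]}\|_\infty\le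 F$. For $\psi:D\times D\times[-M,M]\to\mathbb R$, $\Psi_\psi(x)(u)=\int_D\psi(u,v,x(v))\,dv$ if $\|x\|_\infty\le M$ and $\Psi_\psi(x)=0$ if $\|x\|_\infty>M$. *)

theory Defs
  imports "HOL-Analysis.Analysis" "HOL-Probability.Essential_Supremum"
begin

definition cubeD :: "(real^'d::finite) set" where
  "cubeD = {u. \<forall>i. 0 \<le> u$i \<and> u$i \<le> 1}"

text \<open>Elements of H = L^2(D) are represented by Lebesgue-measurable square-integrable
  functions on D (representatives of the equivalence classes).\<close>
definition Hsp :: "((real^'d::finite) \<Rightarrow> real) set" where
  "Hsp = {x. x \<in> borel_measurable (lebesgue_on cubeD) \<and>
             integrable (lebesgue_on cubeD) (\<lambda>v. (x v)^2)}"

definition Hnorm :: "((real^'d::finite) \<Rightarrow> real) \<Rightarrow> real" where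
  "Hnorm y = sqrt (integral\<^sup>L (lebesgue_on cubeD) (\<lambda>v. (y v)^2))"

definition esssup_norm :: "((real^'d::finite) \<Rightarrow> real) \<Rightarrow> ereal" where
  "esssup_norm x = esssup (lebesgue_on cubeD) (\<lambda>v. ereal \<bar>x v\<bar>)"

text \<open>A layer is a pair (W, b); with input dimension m and output dimension n only the
  entries W i j (i<n, j<m) and b i (i<n) are used.\<close>
type_synonym layer = "(nat \<Rightarrow> nat \<Rightarrow> real) \<times> (nat \<Rightarrow> real)"

definition affine :: "nat \<Rightarrow> nat \<Rightarrow> layer \<Rightarrow> (nat \<Rightarrow> real) \<Rightarrow> (nat \<Rightarrow> real)" where
  "affine m n l x = (\<lambda>i. if i < n then (\<Sum>j<m. fst l i j * x j) + snd l i else 0)"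

definition relu :: "(nat \<Rightarrow> real) \<Rightarrow> (nat \<Rightarrow> real)" where
  "relu x = (\<lambda>i. max (x i) 0)"

text \<open>net_eval p ls = A_{L+1} o sigma o A_L o ... o sigma o A_1, for dimension list
  p = [p_0,...,p_{L+1}] and layer list ls = [A_1,...,A_{L+1}].\<close>
fun net_eval :: "nat list \<Rightarrow> layer list \<Rightarrow> (nat \<Rightarrow> real) \<Rightarrow> (nat \<Rightarrow> real)" where
  "net_eval (m # n # ps) (l # ls) x =
     (if ls = [] then affine m n l x else net_eval (n # ps) ls (relu (affine m n l x)))"
| "net_eval _ _ x = x"

definition net_wf :: "nat list \<Rightarrow> layer list \<Rightarrow> bool" where
  "net_wf p ls \<longleftrightarrow> ls \<noteq> [] \<and> length p = length ls + 1"

definition net_depth :: "layer list \<Rightarrow> nat" where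
  "net_depth ls = length ls - 1"

definition net_width_le :: "nat list \<Rightarrow> layer list \<Rightarrow> nat \<Rightarrow> bool" where
  "net_width_le p ls N \<longleftrightarrow> (\<forall>k\<in>{1..<length ls}. p ! k \<le> N)"

definition net_param_bound :: "nat list \<Rightarrow> layer list \<Rightarrow> real \<Rightarrow> bool" where
  "net_param_bound p ls B \<longleftrightarrow>
     (\<forall>l<length ls. (\<forall>i<p!(l+1). \<forall>j<p!l. \<bar>fst (ls!l) i j\<bar> \<le> B) \<and>
                    (\<forall>i<p!(l+1). \<bar>snd (ls!l) i\<bar> \<le> B))"

definition net_nnz :: "nat list \<Rightarrow> layer list \<Rightarrow> nat" where
  "net_nnz p ls =
     card {(l,i,j). l < length ls \<and> i < p!(l+1) \<and> j < p!l \<and> fst (ls!l) i j \<noteq> 0}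
   + card {(l,i). l < length ls \<and> i < p!(l+1) \<and> snd (ls!l) i \<noteq> 0}"

text \<open>A fixed enumeration of the coordinates of R^d, used to identify
  R^d x R^d x R with R^(2d+1).\<close>
definition coord_idx :: "'d::finite \<Rightarrow> nat" where
  "coord_idx = (SOME e. bij_betw e (UNIV::'d set) {..<CARD('d)})"

definition input_vec :: "real^'d::finite \<Rightarrow> real^'d \<Rightarrow> real \<Rightarrow> (nat \<Rightarrow> real)" where
  "input_vec u v t = (\<lambda>k. if k < CARD('d) then u $ (inv_into UNIV coord_idx k)
        else if k < 2 * CARD('d) then v $ (inv_into UNIV coord_idx (k - CARD('d)))
        else if k = 2 * CARD('d) then t else 0)"

definition net_fun :: "nat list \<Rightarrow> layer list \<Rightarrow> real^'d::finite \<Rightarrow> real^'d \<Rightarrow> real \<Rightarrow> real" where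
  "net_fun p ls u v t = net_eval p ls (input_vec u v t) 0"

definition in_dom :: "real \<Rightarrow> real^'d::finite \<Rightarrow> real^'d \<Rightarrow> real \<Rightarrow> bool" where
  "in_dom M u v t \<longleftrightarrow> u \<in> cubeD \<and> v \<in> cubeD \<and> \<bar>t\<bar> \<le> M"

definition NetClass :: "real \<Rightarrow> nat \<Rightarrow> nat \<Rightarrow> real \<Rightarrow> real \<Rightarrow> real \<Rightarrow>
    (real^'d::finite \<Rightarrow> real^'d \<Rightarrow> real \<Rightarrow> real) set" where
  "NetClass M L N B F S =
     {\<psi> :: real^'d \<Rightarrow> real^'d \<Rightarrow> real \<Rightarrow> real. \<exists>p ls. net_wf p ls \<and> p ! 0 = 2 * CARD('d) + 1 \<and> p ! length ls = 1 \<and>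
             net_depth ls \<le> L \<and> net_width_le p ls N \<and> net_param_bound p ls B \<and>
             real (net_nnz p ls) \<le> S \<and>
             (\<forall>u v t. \<bar>if in_dom M u v t then net_fun p ls (u::real^'d) v t else 0\<bar> \<le> F) \<and>
             \<psi> = (\<lambda>u v t. if in_dom M u v t then net_fun p ls u v t else 0)}"

definition Psi_op :: "real \<Rightarrow> (real^'d::finite \<Rightarrow> real^'d \<Rightarrow> real \<Rightarrow> real) \<Rightarrow>
    (real^'d \<Rightarrow> real) \<Rightarrow> (real^'d \<Rightarrow> real)" where
  "Psi_op M \<psi> x = (if esssup_norm x \<le> ereal M
       then (\<lambda>u. integral\<^sup>L (lebesgue_on cubeD) (\<lambda>v. \<psi> u v (x v)))
       else (\<lambda>u. 0))"

definition op_dist :: "((real^'d::finite \<Rightarrow> real) \<Rightarrow> (real^'d \<Rightarrow> real)) \<Rightarrow>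
    ((real^'d \<Rightarrow> real) \<Rightarrow> (real^'d \<Rightarrow> real)) \<Rightarrow> ereal" where
  "op_dist \<Psi> \<Phi> = (SUP x\<in>Hsp. ereal (Hnorm (\<lambda>u. \<Psi> x u - \<Phi> x u)))"

definition dopen_in :: "'a set \<Rightarrow> ('a \<Rightarrow> 'a \<Rightarrow> ereal) \<Rightarrow> 'a set \<Rightarrow> bool" where
  "dopen_in K d U \<longleftrightarrow> U \<subseteq> K \<and> (\<forall>a\<in>U. \<exists>e>0. \<forall>b\<in>K. d b a < ereal e \<longrightarrow> b \<in> U)"

definition dcompact :: "'a set \<Rightarrow> ('a \<Rightarrow> 'a \<Rightarrow> ereal) \<Rightarrow> bool" where
  "dcompact K d \<longleftrightarrow> (\<forall>\<U>. (\<forall>U\<in>\<U>. dopen_in K d U) \<and> K \<subseteq> \<Union>\<U> \<longrightarrow>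
       (\<exists>\<V>\<subseteq>\<U>. finite \<V> \<and> K \<subseteq> \<Union>\<V>))"

end

theory Submission
  imports Defs
begin


lemma dcompact_cover_image:
  assumes C: "compactin X C" and fK: "f ` C \<subseteq> K"
    and Uo: "\<forall>U\<in>\<U>. dopen_in K d U"
    and cont: "\<forall>a\<in>C. \<forall>e>0. \<exists>V. openin X V \<and> a \<in> V \<and> (\<forall>b\<in>C\<inter>V. d (f b) (f a) < ereal e)"
    and cov: "K \<subseteq> \<Union>\<U>"
  shows "\<exists>\<V>\<subseteq>\<U>. finite \<V> \<and> f ` C \<subseteq> \<Union>\<V>"
proof -
  have "\<forall>a\<in>C. \<exists>U e V. U \<in> \<U> \<and> f a \<in> U \<and> e > 0 \<and> (\<forall>b\<in>K. d b (f a) < ereal e \<longrightarrow> b \<in> U)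
           \<and> openin X V \<and> a \<in> V \<and> (\<forall>b\<in>C\<inter>V. d (f b) (f a) < ereal e)"
  proof
    fix a assume a: "a \<in> C"
    then obtain U where U: "U \<in> \<U>" "f a \<in> U" using fK cov by blast
    then obtain e where e: "e > 0" "\<forall>b\<in>K. d b (f a) < ereal e \<longrightarrow> b \<in> U"
      using Uo U(1) unfolding dopen_in_def by (metis U(2))
    then obtain V where "openin X V \<and> a \<in> V \<and> (\<forall>b\<in>C\<inter>V. d (f b) (f a) < ereal e)"
      using cont a by blast
    then show "\<exists>U e V. U \<in> \<U> \<and> f a \<in> U \<and> e > 0 \<and> (\<forall>b\<in>K. d b (f a) < ereal e \<longrightarrow> b \<in> U)
           \<and> openin X V \<and> a \<in> V \<and> (\<forall>b\<in>C\<inter>V. d (f b) (f a) < ereal e)"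
      using U e by blast
  qed
  then obtain Uf ef Vf where H: "\<And>a. a \<in> C \<Longrightarrow> Uf a \<in> \<U> \<and> f a \<in> Uf a \<and> ef a > 0 \<and> (\<forall>b\<in>K. d b (f a) < ereal (ef a) \<longrightarrow> b \<in> Uf a)
           \<and> openin X (Vf a) \<and> a \<in> Vf a \<and> (\<forall>b\<in>C\<inter>Vf a. d (f b) (f a) < ereal (ef a))"
    by metis
  have H1: "\<And>a. a \<in> C \<Longrightarrow> Uf a \<in> \<U>" using H by blast
  have H3: "\<And>a b. a \<in> C \<Longrightarrow> b \<in> K \<Longrightarrow> d b (f a) < ereal (ef a) \<Longrightarrow> b \<in> Uf a" using H by blast
  have H4: "\<And>a. a \<in> C \<Longrightarrow> openin X (Vf a)" using H by blast
  have H5: "\<And>a. a \<in> C \<Longrightarrow> a \<in> Vf a" using H by blast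
  have H6: "\<And>a b. a \<in> C \<Longrightarrow> b \<in> C \<Longrightarrow> b \<in> Vf a \<Longrightarrow> d (f b) (f a) < ereal (ef a)" using H by blast
  have "C \<subseteq> \<Union>(Vf ` C)" using H5 by blast
  moreover have "\<forall>V\<in>Vf ` C. openin X V" using H4 by blast
  moreover have "(\<forall>U\<in>Vf ` C. openin X U) \<and> C \<subseteq> \<Union>(Vf ` C) \<longrightarrow> (\<exists>\<F>. finite \<F> \<and> \<F> \<subseteq> Vf ` C \<and> C \<subseteq> \<Union>\<F>)"
    using C unfolding compactin_def by blast
  ultimately obtain \<F> where F: "finite \<F>" "\<F> \<subseteq> Vf ` C" "C \<subseteq> \<Union>\<F>"
    by blast
  then obtain F where F2: "F \<subseteq> C" "finite F" "\<F> = Vf ` F"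
    by (meson finite_subset_image)
  show ?thesis
  proof (intro exI conjI)
    show "Uf ` F \<subseteq> \<U>" using H1 F2 by blast
    show "finite (Uf ` F)" using F2 by simp
    show "f ` C \<subseteq> \<Union> (Uf ` F)"
    proof
      fix y assume "y \<in> f ` C"
      then obtain b where b: "b \<in> C" "y = f b" by blast
      then obtain a where a: "a \<in> F" "b \<in> Vf a" using F F2 by blast
      then have aC: "a \<in> C" using F2 by blast
      then have "d (f b) (f a) < ereal (ef a)" using H6 a b by blast
      moreover have "f b \<in> K" using fK b by blast
      ultimately have "f b \<in> Uf a" using H3 aC by blast
      then show "y \<in> \<Union> (Uf ` F)" using a b by blast
    qed
  qed
qed

lemma dcompact_finite_union:
  assumes P: "finite P" and K: "K = (\<Union>p\<in>P. f p ` C p)"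
    and H: "\<And>p \<U>. p \<in> P \<Longrightarrow> \<forall>U\<in>\<U>. dopen_in K d U \<Longrightarrow> K \<subseteq> \<Union>\<U> \<Longrightarrow>
              \<exists>\<V>\<subseteq>\<U>. finite \<V> \<and> f p ` C p \<subseteq> \<Union>\<V>"
  shows "dcompact K d"
  unfolding dcompact_def
proof (intro allI impI)
  fix \<U> assume A: "(\<forall>U\<in>\<U>. dopen_in K d U) \<and> K \<subseteq> \<Union>\<U>"
  then have "\<forall>p\<in>P. \<exists>\<V>. \<V>\<subseteq>\<U> \<and> finite \<V> \<and> f p ` C p \<subseteq> \<Union>\<V>" by (metis A H)
  then obtain Vs where Vs: "\<And>p. p\<in>P \<Longrightarrow> Vs p\<subseteq>\<U> \<and> finite (Vs p) \<and> f p ` C p \<subseteq> \<Union>(Vs p)" by metis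
  show "\<exists>\<V>\<subseteq>\<U>. finite \<V> \<and> K \<subseteq> \<Union>\<V>"
  proof (intro exI conjI)
    show "\<Union>(Vs ` P) \<subseteq> \<U>" using Vs by blast
    show "finite (\<Union>(Vs ` P))" using Vs P by (simp add: finite_UN_I)
    show "K \<subseteq> \<Union>(\<Union>(Vs ` P))"
    proof
      fix y assume "y \<in> K"
      then obtain p where p: "p \<in> P" "y \<in> f p ` C p" using K by blast
      then have "y \<in> \<Union>(Vs p)" using Vs by blast
      then show "y \<in> \<Union>(\<Union>(Vs ` P))" using p by blast
    qed
  qed
qed



definition pclose :: "nat list \<Rightarrow> layer list \<Rightarrow> layer list \<Rightarrow> real \<Rightarrow> bool" where
  "pclose q ls ls' \<delta> \<longleftrightarrow> (\<forall>l<length ls. \<forall>i<q!(l+1). (\<forall>j<q!l. \<bar>fst (ls!l) i j - fst (ls'!l) i j\<bar> \<le> \<delta>)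
       \<and> \<bar>snd (ls!l) i - snd (ls'!l) i\<bar> \<le> \<delta>)"

lemma affine_pert:
  assumes W: "\<forall>i<n. \<forall>j<m. \<bar>fst l i j\<bar> \<le> B"
    and dW: "\<forall>i<n. \<forall>j<m. \<bar>fst l i j - fst l' i j\<bar> \<le> \<delta>"
    and db: "\<forall>i<n. \<bar>snd l i - snd l' i\<bar> \<le> \<delta>"
    and dz: "\<forall>j<m. \<bar>z j - z' j\<bar> \<le> \<eta>" and z': "\<forall>j<m. \<bar>z' j\<bar> \<le> R"
    and pos: "0 \<le> \<delta>" "0 \<le> \<eta>" "0 \<le> B" "0 \<le> R"
  shows "\<bar>affine m n l z i - affine m n l' z' i\<bar> \<le> (m*B + m*R + 1) * (\<delta> + \<eta>)"
proof (cases "i < n")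
  case False
  then show ?thesis using pos by (simp add: affine_def)
next
  case True
  have t: "\<bar>fst l i j * z j - fst l' i j * z' j\<bar> \<le> B*\<eta> + \<delta>*R" if j: "j < m" for j
  proof -
    have "fst l i j * z j - fst l' i j * z' j = fst l i j * (z j - z' j) + (fst l i j - fst l' i j) * z' j"
      by (simp add: algebra_simps)
    also have "\<bar>\<dots>\<bar> \<le> \<bar>fst l i j\<bar> * \<bar>z j - z' j\<bar> + \<bar>fst l i j - fst l' i j\<bar> * \<bar>z' j\<bar>"
      by (metis abs_mult abs_triangle_ineq)
    also have "\<dots> \<le> B*\<eta> + \<delta>*R"
      apply (rule add_mono; rule mult_mono)
      using W dW dz z' True j pos by simp_all
    finally show ?thesis .
  qed
  have "affine m n l z i - affine m n l' z' i
      = (\<Sum>j<m. fst l i j * z j - fst l' i j * z' j) + (snd l i - snd l' i)"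
    using True by (simp add: affine_def sum_subtractf)
  also have "\<bar>\<dots>\<bar> \<le> (\<Sum>j<m. \<bar>fst l i j * z j - fst l' i j * z' j\<bar>) + \<bar>snd l i - snd l' i\<bar>"
    by (rule order_trans[OF abs_triangle_ineq add_mono[OF sum_abs order_refl]])
  also have "\<dots> \<le> (\<Sum>j<m. B*\<eta> + \<delta>*R) + \<delta>"
    apply (rule add_mono)
     apply (rule sum_mono) using t apply simp
    using db True by simp
  also have "\<dots> = m*B*\<eta> + m*\<delta>*R + \<delta>" by (simp add: algebra_simps)
  also have "\<dots> \<le> (m*B + m*R + 1) * (\<delta> + \<eta>)"
  proof -
    have "0 \<le> m*B*\<delta>" "0 \<le> m*R*\<eta>" "0 \<le> \<eta>" using pos by auto
    then show ?thesis by (simp add: algebra_simps)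
  qed
  finally show ?thesis .
qed

lemma affine_bound:
  assumes W: "\<forall>i<n. \<forall>j<m. \<bar>fst l i j\<bar> \<le> B" and b: "\<forall>i<n. \<bar>snd l i\<bar> \<le> B"
    and z: "\<forall>j<m. \<bar>z j\<bar> \<le> R" and pos: "0 \<le> B" "0 \<le> R"
  shows "\<bar>affine m n l z i\<bar> \<le> m*B*R + B"
proof (cases "i < n")
  case False
  then show ?thesis using pos by (simp add: affine_def)
next
  case True
  have e: "affine m n l z i = (\<Sum>j<m. fst l i j * z j) + snd l i"
    using True by (simp add: affine_def)
  have "\<bar>affine m n l z i\<bar> \<le> (\<Sum>j<m. \<bar>fst l i j * z j\<bar>) + \<bar>snd l i\<bar>"
    unfolding e by (rule order_trans[OF abs_triangle_ineq add_mono[OF sum_abs order_refl]])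
  also have "\<dots> \<le> (\<Sum>j<m. B*R) + B"
    apply (rule add_mono)
     apply (rule sum_mono)
    using W z b True pos by (simp_all add: abs_mult mult_mono)
  finally show ?thesis by simp
qed

lemma relu_lip: "\<bar>relu x i - relu y i\<bar> \<le> \<bar>x i - y i\<bar>"
  by (simp add: relu_def)

lemma relu_bd: "\<bar>relu x i\<bar> \<le> \<bar>x i\<bar>"
  by (simp add: relu_def)


lemma npb_shift:
  assumes "net_param_bound (m#k#ps) (l#rest) B"
  shows "net_param_bound (k#ps) rest B" "\<forall>i<k. \<forall>j<m. \<bar>fst l i j\<bar> \<le> B" "\<forall>i<k. \<bar>snd l i\<bar> \<le> B"
proof -
  have A: "\<forall>l'<length (l#rest). (\<forall>i<(m#k#ps)!(l'+1). \<forall>j<(m#k#ps)!l'. \<bar>fst ((l#rest)!l') i j\<bar> \<le> B) \<and>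
                    (\<forall>i<(m#k#ps)!(l'+1). \<bar>snd ((l#rest)!l') i\<bar> \<le> B)"
    using assms unfolding net_param_bound_def by blast
  show "net_param_bound (k#ps) rest B" unfolding net_param_bound_def
  proof (intro allI impI)
    fix l' assume "l' < length rest"
    then show "(\<forall>i<(k#ps)!(l'+1). \<forall>j<(k#ps)!l'. \<bar>fst (rest!l') i j\<bar> \<le> B) \<and>
                    (\<forall>i<(k#ps)!(l'+1). \<bar>snd (rest!l') i\<bar> \<le> B)"
      using A[rule_format, of "Suc l'"] by simp
  qed
  show "\<forall>i<k. \<forall>j<m. \<bar>fst l i j\<bar> \<le> B" "\<forall>i<k. \<bar>snd l i\<bar> \<le> B"
    using A[rule_format, of 0] by simp_all
qed

lemma pclose_shift:
  assumes "pclose (m#k#ps) (l#rest) (l'#rest') \<delta>"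
  shows "pclose (k#ps) rest rest' \<delta>" "\<forall>i<k. \<forall>j<m. \<bar>fst l i j - fst l' i j\<bar> \<le> \<delta>" "\<forall>i<k. \<bar>snd l i - snd l' i\<bar> \<le> \<delta>"
proof -
  have A: "\<forall>q<length (l#rest). \<forall>i<(m#k#ps)!(q+1). (\<forall>j<(m#k#ps)!q. \<bar>fst ((l#rest)!q) i j - fst ((l'#rest')!q) i j\<bar> \<le> \<delta>)
       \<and> \<bar>snd ((l#rest)!q) i - snd ((l'#rest')!q) i\<bar> \<le> \<delta>"
    using assms unfolding pclose_def by blast
  show "pclose (k#ps) rest rest' \<delta>" unfolding pclose_def
  proof (intro allI impI)
    fix q i assume "q < length rest" "i < (k#ps)!(q+1)"
    then show "(\<forall>j<(k#ps)!q. \<bar>fst (rest!q) i j - fst (rest'!q) i j\<bar> \<le> \<delta>)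
       \<and> \<bar>snd (rest!q) i - snd (rest'!q) i\<bar> \<le> \<delta>"
      using A[rule_format, of "Suc q" i] by simp
  qed
  show "\<forall>i<k. \<forall>j<m. \<bar>fst l i j - fst l' i j\<bar> \<le> \<delta>" "\<forall>i<k. \<bar>snd l i - snd l' i\<bar> \<le> \<delta>"
    using A[rule_format, of 0] by simp_all
qed

lemma net_pert:
  assumes B0: "0 \<le> B"
  shows "\<forall>q R. length q = length ls + 1 \<longrightarrow> ls \<noteq> [] \<longrightarrow> 0 \<le> R \<longrightarrow>
    (\<exists>K\<ge>0. \<forall>ls' z z' \<delta> \<eta>. length ls' = length ls \<longrightarrow> net_param_bound q ls B \<longrightarrow> net_param_bound q ls' B \<longrightarrow>
        pclose q ls ls' \<delta> \<longrightarrow> 0 \<le> \<delta> \<longrightarrow> 0 \<le> \<eta> \<longrightarrow>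
        (\<forall>j<q!0. \<bar>z j\<bar> \<le> R \<and> \<bar>z' j\<bar> \<le> R \<and> \<bar>z j - z' j\<bar> \<le> \<eta>) \<longrightarrow>
        (\<forall>i. \<bar>net_eval q ls z i - net_eval q ls' z' i\<bar> \<le> K * (\<delta> + \<eta>)))"
proof (induction ls)
  case Nil
  then show ?case by simp
next
  case (Cons l rest)
  show ?case
  proof (intro allI impI)
    fix q :: "nat list" and R :: real
    assume q: "length q = length (l # rest) + 1" and R: "0 \<le> R"
    then obtain m k ps where qe: "q = m # k # ps" "length ps = length rest"
      by (cases q; cases "tl q"; auto)
    define K1 where "K1 = real m * B + real m * R + 1"
    have K1: "K1 \<ge> 0" using B0 R by (simp add: K1_def)
    show "\<exists>K\<ge>0. \<forall>ls' z z' \<delta> \<eta>. length ls' = length (l # rest) \<longrightarrow> net_param_bound q (l # rest) B \<longrightarrow> net_param_bound q ls' B \<longrightarrow>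
        pclose q (l # rest) ls' \<delta> \<longrightarrow> 0 \<le> \<delta> \<longrightarrow> 0 \<le> \<eta> \<longrightarrow>
        (\<forall>j<q!0. \<bar>z j\<bar> \<le> R \<and> \<bar>z' j\<bar> \<le> R \<and> \<bar>z j - z' j\<bar> \<le> \<eta>) \<longrightarrow>
        (\<forall>i. \<bar>net_eval q (l # rest) z i - net_eval q ls' z' i\<bar> \<le> K * (\<delta> + \<eta>))"
    proof (cases "rest = []")
      case True
      show ?thesis
      proof (intro exI[of _ K1] conjI K1 allI impI)
        fix ls' z z' \<delta> \<eta> i
        assume A: "length ls' = length (l # rest)" "net_param_bound q (l # rest) B" "net_param_bound q ls' B"
          "pclose q (l # rest) ls' \<delta>" "0 \<le> \<delta>" "0 \<le> \<eta>"
          "\<forall>j<q!0. \<bar>z j\<bar> \<le> R \<and> \<bar>z' j\<bar> \<le> R \<and> \<bar>z j - z' j\<bar> \<le> \<eta>"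
        obtain l' where l': "ls' = [l']" using A(1) True by (cases ls') auto
        have e1: "net_eval q (l # rest) z i = affine m k l z i" using qe True by simp
        have e2: "net_eval q ls' z' i = affine m k l' z' i" using qe l' by simp
        show "\<bar>net_eval q (l # rest) z i - net_eval q ls' z' i\<bar> \<le> K1 * (\<delta> + \<eta>)"
          unfolding e1 e2 K1_def
          apply (rule affine_pert)
          using npb_shift(2)[of m k ps l rest B] pclose_shift(2,3)[of m k ps l rest l' "[]" \<delta>]
             A qe l' True B0 R by auto
      qed
    next
      case False
      define R' where "R' = real m * B * R + B"
      have R': "0 \<le> R'" using B0 R by (simp add: R'_def)
      have "length (k#ps) = length rest + 1" using qe by simp
      then obtain K2 where K2: "K2 \<ge> 0" and K2H: "\<forall>ls' z z' \<delta> \<eta>. length ls' = length rest \<longrightarrow> net_param_bound (k#ps) rest B \<longrightarrow> net_param_bound (k#ps) ls' B \<longrightarrow>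
        pclose (k#ps) rest ls' \<delta> \<longrightarrow> 0 \<le> \<delta> \<longrightarrow> 0 \<le> \<eta> \<longrightarrow>
        (\<forall>j<(k#ps)!0. \<bar>z j\<bar> \<le> R' \<and> \<bar>z' j\<bar> \<le> R' \<and> \<bar>z j - z' j\<bar> \<le> \<eta>) \<longrightarrow>
        (\<forall>i. \<bar>net_eval (k#ps) rest z i - net_eval (k#ps) ls' z' i\<bar> \<le> K2 * (\<delta> + \<eta>))"
        using Cons.IH False R' by blast
      show ?thesis
      proof (intro exI[of _ "K2 * (1 + K1)"] conjI allI impI)
        show "0 \<le> K2 * (1 + K1)" using K1 K2 by simp
        fix ls' z z' \<delta> \<eta> i
        assume A: "length ls' = length (l # rest)" "net_param_bound q (l # rest) B" "net_param_bound q ls' B"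
          "pclose q (l # rest) ls' \<delta>" "0 \<le> \<delta>" "0 \<le> \<eta>"
          "\<forall>j<q!0. \<bar>z j\<bar> \<le> R \<and> \<bar>z' j\<bar> \<le> R \<and> \<bar>z j - z' j\<bar> \<le> \<eta>"
        obtain l' rest' where l': "ls' = l' # rest'" "length rest' = length rest" using A(1) by (cases ls') auto
        have rest': "rest' \<noteq> []" using False l' by auto
        define y where "y = relu (affine m k l z)"
        define y' where "y' = relu (affine m k l' z')"
        have e1: "net_eval q (l # rest) z i = net_eval (k#ps) rest y i" using qe False by (simp add: y_def)
        have e2: "net_eval q ls' z' i = net_eval (k#ps) rest' y' i" using qe l' rest' by (simp add: y'_def)
        note b1 = npb_shift[of m k ps l rest B] and b2 = npb_shift[of m k ps l' rest' B]
          and pc = pclose_shift[of m k ps l rest l' rest' \<delta>]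
        have Az: "\<forall>j<m. \<bar>z j\<bar> \<le> R" "\<forall>j<m. \<bar>z' j\<bar> \<le> R" "\<forall>j<m. \<bar>z j - z' j\<bar> \<le> \<eta>"
          using A(7) qe by auto
        have yb: "\<bar>y j\<bar> \<le> R'" for j
          unfolding y_def R'_def
          using order_trans[OF relu_bd[of "affine m k l z" j] affine_bound[of k m l B z R j]] b1 A(2) qe Az B0 R by simp
        have yb': "\<bar>y' j\<bar> \<le> R'" for j
          unfolding y'_def R'_def
          using order_trans[OF relu_bd[of "affine m k l' z'" j] affine_bound[of k m l' B z' R j]] b2 A(3) qe l' Az B0 R by simp
        have yd: "\<bar>y j - y' j\<bar> \<le> K1 * (\<delta> + \<eta>)" for j
          unfolding y_def y'_def K1_def
          apply (rule order_trans[OF relu_lip])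
          apply (rule affine_pert)
          using b1 pc A qe l' Az B0 R by simp_all
        have "\<bar>net_eval (k#ps) rest y i - net_eval (k#ps) rest' y' i\<bar> \<le> K2 * (\<delta> + K1 * (\<delta> + \<eta>))"
          using K2H[rule_format, of rest' \<delta> "K1 * (\<delta> + \<eta>)" y y'] l' b1 b2 pc A qe yb yb' yd K1 by simp
        also have "\<dots> \<le> K2 * (1 + K1) * (\<delta> + \<eta>)"
        proof -
          have "\<delta> + K1 * (\<delta> + \<eta>) \<le> (1 + K1) * (\<delta> + \<eta>)" using A(6) by (simp add: algebra_simps)
          then show ?thesis using K2 by (metis mult.assoc mult_left_mono)
        qed
        finally show "\<bar>net_eval q (l # rest) z i - net_eval q ls' z' i\<bar> \<le> K2 * (1 + K1) * (\<delta> + \<eta>)"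
          unfolding e1 e2 .
      qed
    qed
  qed
qed



lemma cube_eq: "(cubeD :: (real^'d::finite) set) = cbox 0 (vec 1)"
  by (auto simp: cubeD_def mem_box_cart)

lemma cube_lmeas: "(cubeD :: (real^'d::finite) set) \<in> lmeasurable"
  unfolding cube_eq by simp

lemma cube_sets: "(cubeD :: (real^'d::finite) set) \<in> sets lebesgue"
  using cube_lmeas fmeasurableD by blast

lemma fin_cube: "finite_measure (lebesgue_on (cubeD :: (real^'d::finite) set))"
  by (rule finite_measure_lebesgue_on[OF cube_lmeas])

definition cmu :: "'d::finite itself \<Rightarrow> real" where
  "cmu _ = measure (lebesgue_on (cubeD :: (real^'d) set)) (space (lebesgue_on (cubeD :: (real^'d) set)))"

lemma cmu_nonneg: "cmu TYPE('d::finite) \<ge> 0"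
  by (simp add: cmu_def)

lemma int_le_const:
  fixes f :: "real^'d::finite \<Rightarrow> real"
  assumes "\<And>v. \<bar>f v\<bar> \<le> c"
  shows "integral\<^sup>L (lebesgue_on (cubeD :: (real^'d) set)) f \<le> cmu TYPE('d) * c"
proof (cases "integrable (lebesgue_on (cubeD :: (real^'d) set)) f")
  case True
  have "integral\<^sup>L (lebesgue_on (cubeD :: (real^'d) set)) f \<le> integral\<^sup>L (lebesgue_on (cubeD :: (real^'d) set)) (\<lambda>v. c)"
    apply (rule integral_mono[OF True])
    using finite_measure.integrable_const[OF fin_cube] apply blast
    using assms abs_le_D1 by blast
  then show ?thesis by (simp add: cmu_def)
next
  case False
  have "0 \<le> c" using assms[of 0] by linarith
  then show ?thesis using cmu_nonneg[where 'd='d] False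
    by (simp add: not_integrable_integral_eq)
qed

lemma opdist_bound:
  fixes \<psi>1 \<psi>2 :: "real^'d::finite \<Rightarrow> real^'d \<Rightarrow> real \<Rightarrow> real"
  assumes I1: "\<And>u x. x \<in> Hsp \<Longrightarrow> integrable (lebesgue_on cubeD) (\<lambda>v. \<psi>1 u v (x v))"
    and I2: "\<And>u x. x \<in> Hsp \<Longrightarrow> integrable (lebesgue_on cubeD) (\<lambda>v. \<psi>2 u v (x v))"
    and D: "\<And>u v t. \<bar>\<psi>1 u v t - \<psi>2 u v t\<bar> \<le> c" and c: "0 \<le> c"
  shows "op_dist (Psi_op M \<psi>1) (Psi_op M \<psi>2) \<le> ereal (c * cmu TYPE('d) * sqrt (cmu TYPE('d)))"
  unfolding op_dist_def
proof (rule SUP_least)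
  fix x :: "real^'d \<Rightarrow> real" assume x: "x \<in> Hsp"
  define y where "y = (\<lambda>u. Psi_op M \<psi>1 x u - Psi_op M \<psi>2 x u)"
  define \<mu> where "\<mu> = cmu TYPE('d)"
  have mu: "0 \<le> \<mu>" using cmu_nonneg by (simp add: \<mu>_def)
  have yb: "\<bar>y u\<bar> \<le> c * \<mu>" for u
  proof (cases "esssup_norm x \<le> ereal M")
    case True
    have "y u = integral\<^sup>L (lebesgue_on cubeD) (\<lambda>v. \<psi>1 u v (x v)) - integral\<^sup>L (lebesgue_on cubeD) (\<lambda>v. \<psi>2 u v (x v))"
      using True by (simp add: y_def Psi_op_def)
    also have "\<dots> = integral\<^sup>L (lebesgue_on cubeD) (\<lambda>v. \<psi>1 u v (x v) - \<psi>2 u v (x v))"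
      using I1[OF x] I2[OF x] by simp
    finally have "\<bar>y u\<bar> \<le> integral\<^sup>L (lebesgue_on cubeD) (\<lambda>v. \<bar>\<psi>1 u v (x v) - \<psi>2 u v (x v)\<bar>)"
      using integral_abs_bound by simp
    also have "\<dots> \<le> \<mu> * c" unfolding \<mu>_def
      by (rule int_le_const) (use D in simp)
    finally show ?thesis by (simp add: mult.commute)
  next
    case False
    then show ?thesis using c mu by (simp add: y_def Psi_op_def)
  qed
  have "integral\<^sup>L (lebesgue_on cubeD) (\<lambda>u. (y u)^2) \<le> \<mu> * (c * \<mu>)^2"
    unfolding \<mu>_def
  proof (rule int_le_const)
    fix u
    have "\<bar>y u\<bar>^2 \<le> (c*cmu TYPE('d))^2"
      using yb[of u] by (intro power_mono) (simp_all add: \<mu>_def)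
    then show "\<bar>(y u)^2\<bar> \<le> (c * cmu TYPE('d))^2" by simp
  qed
  then have "Hnorm y \<le> sqrt (\<mu> * (c * \<mu>)^2)"
    unfolding Hnorm_def by simp
  also have "\<dots> = c * \<mu> * sqrt \<mu>"
    using c mu by (simp add: real_sqrt_mult)
  finally show "ereal (Hnorm (\<lambda>u. Psi_op M \<psi>1 x u - Psi_op M \<psi>2 x u)) \<le> ereal (c * cmu TYPE('d) * sqrt (cmu TYPE('d)))"
    by (simp add: y_def \<mu>_def)
qed



lemma affine_meas:
  assumes "\<And>j. (\<lambda>w. z w j) \<in> borel_measurable Mm"
  shows "(\<lambda>w. affine m k l (z w) i) \<in> borel_measurable Mm"
  unfolding affine_def using assms by (cases "i < k") auto

lemma net_eval_meas:
  "(\<And>j. (\<lambda>w. z w j) \<in> borel_measurable Mm) \<Longrightarrow> (\<lambda>w. net_eval q ls (z w) i) \<in> borel_measurable Mm"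
proof (induction ls arbitrary: q z i)
  case Nil
  have "net_eval q [] x = x" for x
  proof (cases q)
    case (Cons a q')
    then show ?thesis by (cases q') auto
  qed simp
  then show ?case using Nil by simp
next
  case (Cons l rest)
  show ?case
  proof (cases q)
    case Nil
    then show ?thesis using Cons.prems by simp
  next
    case (Cons m q')
    show ?thesis
    proof (cases q')
      case Nil
      then show ?thesis using Cons.prems \<open>q = m # q'\<close> by simp
    next
      case (Cons k ps)
      have r: "(\<lambda>w. relu (affine m k l (z w)) j) \<in> borel_measurable Mm" for j
        unfolding relu_def using affine_meas[OF Cons.prems] by measurable
      show ?thesis
      proof (cases "rest = []")
        case True
        then show ?thesis using \<open>q = m # q'\<close> Cons affine_meas[OF Cons.prems] by simp
      next
        case False
        then show ?thesis using \<open>q = m # q'\<close> Cons Cons.IH[OF r] by simp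
      qed
    qed
  qed
qed

lemma input_meas:
  fixes x :: "real^'d::finite \<Rightarrow> real"
  assumes x: "x \<in> borel_measurable (lebesgue_on cubeD)"
  shows "(\<lambda>v. input_vec u v (x v) j) \<in> borel_measurable (lebesgue_on (cubeD :: (real^'d) set))"
proof -
  have c: "(\<lambda>v::real^'d. v $ i) \<in> borel_measurable (lebesgue_on cubeD)" for i
    by (rule continuous_imp_measurable_on_sets_lebesgue[OF _ cube_sets]) (intro continuous_intros)
  show ?thesis unfolding input_vec_def
    using c x by auto
qed

lemma psi_int:
  fixes x :: "real^'d::finite \<Rightarrow> real" and p ls
  assumes x: "x \<in> borel_measurable (lebesgue_on cubeD)"
    and F: "\<forall>u v t. \<bar>if in_dom M u (v::real^'d) t then net_fun p ls u v t else 0\<bar> \<le> F"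
  shows "integrable (lebesgue_on (cubeD :: (real^'d) set)) (\<lambda>v. (\<lambda>u v t. if in_dom M u v t then net_fun p ls u v t else 0) u v (x v))"
proof -
  have nm: "(\<lambda>v. net_fun p ls u v (x v)) \<in> borel_measurable (lebesgue_on (cubeD :: (real^'d) set))"
    unfolding net_fun_def by (rule net_eval_meas[OF input_meas[OF x]])
  have xm: "Measurable.pred (lebesgue_on (cubeD :: (real^'d) set)) (\<lambda>v. \<bar>x v\<bar> \<le> M)"
    using x by measurable
  have m: "(\<lambda>v. if u \<in> cubeD \<and> \<bar>x v\<bar> \<le> M then net_fun p ls u v (x v) else 0) \<in> borel_measurable (lebesgue_on (cubeD :: (real^'d) set))"
    using nm xm by measurable
  have m2: "(\<lambda>v. (\<lambda>u v t. if in_dom M u v t then net_fun p ls u v t else 0) u v (x v)) \<in> borel_measurable (lebesgue_on (cubeD :: (real^'d) set))"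
    by (rule measurable_cong[THEN iffD1, OF _ m]) (simp add: in_dom_def)
  show ?thesis
    by (rule finite_measure.integrable_const_bound[OF fin_cube _ m2, of F]) (use F in simp)
qed



definition Iset :: "nat list \<Rightarrow> (nat \<times> nat \<times> nat) set" where
  "Iset p = (SIGMA l:{..<length p - 1}. SIGMA i:{..<p!(l+1)}. {..p!l})"

definition ls_of :: "nat list \<Rightarrow> (nat \<times> nat \<times> nat \<Rightarrow> real) \<Rightarrow> layer list" where
  "ls_of p \<theta> = map (\<lambda>l. (\<lambda>i j. \<theta> (l,i,j), \<lambda>i. \<theta> (l,i,p!l))) [0..<length p - 1]"

lemma finite_Iset: "finite (Iset p)"
  unfolding Iset_def by (intro finite_SigmaI) auto

lemma length_ls_of[simp]: "length (ls_of p \<theta>) = length p - 1"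
  by (simp add: ls_of_def)

lemma nth_ls_of: "l < length p - 1 \<Longrightarrow> ls_of p \<theta> ! l = (\<lambda>i j. \<theta> (l,i,j), \<lambda>i. \<theta> (l,i,p!l))"
  by (simp add: ls_of_def)

lemma Iset_mem: "(l,i,j) \<in> Iset p \<longleftrightarrow> l < length p - 1 \<and> i < p!(l+1) \<and> j \<le> p!l"
  by (auto simp: Iset_def)

lemma npb_of:
  assumes "\<forall>k\<in>Iset p. \<bar>\<theta> k\<bar> \<le> B"
  shows "net_param_bound p (ls_of p \<theta>) B"
  unfolding net_param_bound_def using assms by (auto simp: nth_ls_of Iset_mem)

lemma pclose_of:
  assumes "\<forall>k\<in>Iset p. \<bar>\<theta> k - \<theta>' k\<bar> \<le> \<delta>"
  shows "pclose p (ls_of p \<theta>) (ls_of p \<theta>') \<delta>"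
  unfolding pclose_def using assms by (auto simp: nth_ls_of Iset_mem)

lemma input_bound:
  assumes "in_dom M u v t"
  shows "\<bar>input_vec u v t j\<bar> \<le> 1 + M"
proof -
  have u: "0 \<le> u $ i \<and> u $ i \<le> 1" "0 \<le> v $ i \<and> v $ i \<le> 1" "\<bar>t\<bar> \<le> M" for i
    using assms by (auto simp: in_dom_def cubeD_def)
  then have "0 \<le> M" by (meson abs_ge_zero order_trans)
  then have "u $ i \<le> 1 + M" "v $ i \<le> 1 + M" for i using u(1,2)[of i] by linarith+
  then show ?thesis unfolding input_vec_def using u by auto
qed

lemma net_close:
  assumes B0: "0 \<le> B" and M0: "0 \<le> M" and q: "length p \<ge> 2" and ls: "length ls = length p - 1"
    and pb: "net_param_bound p ls B"
  shows "\<exists>K\<ge>0. \<forall>ls' \<delta>. length ls' = length ls \<longrightarrow>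
     net_param_bound p ls' B \<longrightarrow> pclose p ls ls' \<delta> \<longrightarrow> 0 \<le> \<delta> \<longrightarrow>
     (\<forall>u v t. in_dom M u v t \<longrightarrow> \<bar>net_fun p ls u v t - net_fun p ls' (u::real^'d::finite) v t\<bar> \<le> K * \<delta>)"
proof -
  have "length p = length ls + 1" "ls \<noteq> []" "0 \<le> 1 + M" using q ls M0 by auto
  then have "\<exists>K\<ge>0. \<forall>ls' z z' \<delta> \<eta>. length ls' = length ls \<longrightarrow> net_param_bound p ls B \<longrightarrow> net_param_bound p ls' B \<longrightarrow>
        pclose p ls ls' \<delta> \<longrightarrow> 0 \<le> \<delta> \<longrightarrow> 0 \<le> \<eta> \<longrightarrow>
        (\<forall>j<p!0. \<bar>z j\<bar> \<le> 1 + M \<and> \<bar>z' j\<bar> \<le> 1 + M \<and> \<bar>z j - z' j\<bar> \<le> \<eta>) \<longrightarrow>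
        (\<forall>i. \<bar>net_eval p ls z i - net_eval p ls' z' i\<bar> \<le> K * (\<delta> + \<eta>))"
    by (intro net_pert[OF B0, of ls, rule_format]) simp_all
  then obtain K where K': "K \<ge> 0 \<and> (\<forall>ls' z z' \<delta> \<eta>. length ls' = length ls \<longrightarrow> net_param_bound p ls B \<longrightarrow> net_param_bound p ls' B \<longrightarrow>
        pclose p ls ls' \<delta> \<longrightarrow> 0 \<le> \<delta> \<longrightarrow> 0 \<le> \<eta> \<longrightarrow>
        (\<forall>j<p!0. \<bar>z j\<bar> \<le> 1 + M \<and> \<bar>z' j\<bar> \<le> 1 + M \<and> \<bar>z j - z' j\<bar> \<le> \<eta>) \<longrightarrow>
        (\<forall>i. \<bar>net_eval p ls z i - net_eval p ls' z' i\<bar> \<le> K * (\<delta> + \<eta>)))" ..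
  have K: "K \<ge> 0" using K' by (rule conjunct1)
  have KH: "\<forall>ls' z z' \<delta> \<eta>. length ls' = length ls \<longrightarrow> net_param_bound p ls B \<longrightarrow> net_param_bound p ls' B \<longrightarrow>
        pclose p ls ls' \<delta> \<longrightarrow> 0 \<le> \<delta> \<longrightarrow> 0 \<le> \<eta> \<longrightarrow>
        (\<forall>j<p!0. \<bar>z j\<bar> \<le> 1 + M \<and> \<bar>z' j\<bar> \<le> 1 + M \<and> \<bar>z j - z' j\<bar> \<le> \<eta>) \<longrightarrow>
        (\<forall>i. \<bar>net_eval p ls z i - net_eval p ls' z' i\<bar> \<le> K * (\<delta> + \<eta>))" using K' by (rule conjunct2)
  show ?thesis
  proof (intro exI[of _ K] conjI K allI impI)
    fix ls' \<delta> and u v :: "real^'d" and t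
    assume A: "length ls' = length ls" "net_param_bound p ls' B" "pclose p ls ls' \<delta>" "0 \<le> \<delta>" "in_dom M u v t"
    have "\<forall>j<p!0. \<bar>input_vec u v t j\<bar> \<le> 1 + M \<and> \<bar>input_vec u v t j\<bar> \<le> 1 + M \<and> \<bar>input_vec u v t j - input_vec u v t j\<bar> \<le> 0"
      using input_bound[OF A(5)] by simp
    then have "\<bar>net_eval p ls (input_vec u v t) 0 - net_eval p ls' (input_vec u v t) 0\<bar> \<le> K * (\<delta> + 0)"
      using KH[rule_format, of ls' \<delta> 0 "input_vec u v t" "input_vec u v t"] A pb by simp
    then show "\<bar>net_fun p ls u v t - net_fun p ls' (u::real^'d::finite) v t\<bar> \<le> K * \<delta>"
      by (simp add: net_fun_def)
  qed
qed



lemma box_open: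
  assumes I: "finite I"
  shows "openin (product_topology (\<lambda>_. euclideanreal) I)
     {\<theta> \<in> topspace (product_topology (\<lambda>_. euclideanreal) I). \<forall>k\<in>I. \<bar>\<theta> k - a k\<bar> < \<delta>}"
proof -
  let ?X = "product_topology (\<lambda>_. euclideanreal) I"
  have eq: "{\<theta> \<in> topspace ?X. \<forall>k\<in>I. \<bar>\<theta> k - a k\<bar> < \<delta>}
     = (\<Inter>k\<in>I. {\<theta> \<in> topspace ?X. \<theta> k \<in> ball (a k) \<delta>}) \<inter> topspace ?X"
    by (auto simp: dist_real_def abs_minus_commute)
  show ?thesis unfolding eq
  proof (rule openin_INT[OF I])
    fix k assume "k \<in> I"
    show "openin ?X {\<theta> \<in> topspace ?X. \<theta> k \<in> ball (a k) \<delta>}"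
      by (rule openin_continuous_map_preimage[OF continuous_map_product_projection[OF \<open>k \<in> I\<close>]])
         (simp add: open_openin[symmetric])
  qed
qed

lemma closedin_nbhd:
  assumes I: "finite I"
    and H: "\<And>\<theta>0. \<theta>0 \<in> topspace (product_topology (\<lambda>_. euclideanreal) I) \<Longrightarrow> \<not> P \<theta>0 \<Longrightarrow>
       \<exists>\<delta>>0. \<forall>\<theta>\<in>topspace (product_topology (\<lambda>_. euclideanreal) I). (\<forall>k\<in>I. \<bar>\<theta> k - \<theta>0 k\<bar> < \<delta>) \<longrightarrow> \<not> P \<theta>"
  shows "closedin (product_topology (\<lambda>_. euclideanreal) I) {\<theta> \<in> topspace (product_topology (\<lambda>_. euclideanreal) I). P \<theta>}"
  unfolding closedin_def
proof (intro conjI)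
  let ?X = "product_topology (\<lambda>_. euclideanreal) I"
  show "{\<theta> \<in> topspace ?X. P \<theta>} \<subseteq> topspace ?X" by blast
  show "openin ?X (topspace ?X - {\<theta> \<in> topspace ?X. P \<theta>})"
    unfolding openin_subopen[of ?X "topspace ?X - {\<theta> \<in> topspace ?X. P \<theta>}"]
  proof
    fix \<theta>0 assume t0: "\<theta>0 \<in> topspace ?X - {\<theta> \<in> topspace ?X. P \<theta>}"
    then obtain \<delta> where d: "\<delta> > 0" "\<forall>\<theta>\<in>topspace ?X. (\<forall>k\<in>I. \<bar>\<theta> k - \<theta>0 k\<bar> < \<delta>) \<longrightarrow> \<not> P \<theta>"
      using H by blast
    show "\<exists>T. openin ?X T \<and> \<theta>0 \<in> T \<and> T \<subseteq> topspace ?X - {\<theta> \<in> topspace ?X. P \<theta>}"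
    proof (intro exI conjI)
      show "openin ?X {\<theta> \<in> topspace ?X. \<forall>k\<in>I. \<bar>\<theta> k - \<theta>0 k\<bar> < \<delta>}" by (rule box_open[OF I])
      show "\<theta>0 \<in> {\<theta> \<in> topspace ?X. \<forall>k\<in>I. \<bar>\<theta> k - \<theta>0 k\<bar> < \<delta>}" using t0 d by simp
      show "{\<theta> \<in> topspace ?X. \<forall>k\<in>I. \<bar>\<theta> k - \<theta>0 k\<bar> < \<delta>} \<subseteq> topspace ?X - {\<theta> \<in> topspace ?X. P \<theta>}"
        using d by blast
    qed
  qed
qed

lemma box_compact:
  "compactin (product_topology (\<lambda>_. euclideanreal) I) (PiE I (\<lambda>_. {-B..B::real}))"
  by (simp add: compactin_PiE)

lemma box_closed:
  "closedin (product_topology (\<lambda>_. euclideanreal) I) (PiE I (\<lambda>_. {-B..B::real}))"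
  by (rule compactin_imp_closedin[OF _ box_compact]) (simp add: Hausdorff_space_product_topology)

lemma nnz_mono:
  assumes "\<forall>k\<in>Iset p. \<theta>0 k \<noteq> 0 \<longrightarrow> \<theta> k \<noteq> 0"
  shows "net_nnz p (ls_of p \<theta>0) \<le> net_nnz p (ls_of p \<theta>)"
proof -
  have f1: "finite {(l,i,j). l < length (ls_of p \<theta>) \<and> i < p!(l+1) \<and> j < p!l \<and> fst (ls_of p \<theta> ! l) i j \<noteq> 0}"
    by (rule finite_subset[OF _ finite_Iset[of p]]) (auto simp: Iset_mem)
  have f2: "finite {(l,i). l < length (ls_of p \<theta>) \<and> i < p!(l+1) \<and> snd (ls_of p \<theta> ! l) i \<noteq> 0}"
    by (rule finite_subset[of _ "SIGMA l:{..<length p - 1}. {..<p!(l+1)}"]) (auto intro: finite_SigmaI)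
  have s1: "{(l,i,j). l < length (ls_of p \<theta>0) \<and> i < p!(l+1) \<and> j < p!l \<and> fst (ls_of p \<theta>0 ! l) i j \<noteq> 0}
      \<subseteq> {(l,i,j). l < length (ls_of p \<theta>) \<and> i < p!(l+1) \<and> j < p!l \<and> fst (ls_of p \<theta> ! l) i j \<noteq> 0}"
    using assms by (auto simp: nth_ls_of Iset_mem)
  have s2: "{(l,i). l < length (ls_of p \<theta>0) \<and> i < p!(l+1) \<and> snd (ls_of p \<theta>0 ! l) i \<noteq> 0}
      \<subseteq> {(l,i). l < length (ls_of p \<theta>) \<and> i < p!(l+1) \<and> snd (ls_of p \<theta> ! l) i \<noteq> 0}"
    using assms by (auto simp: nth_ls_of Iset_mem)
  show ?thesis unfolding net_nnz_def
    using card_mono[OF f1 s1] card_mono[OF f2 s2] by linarith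
qed



definition psi_of :: "real \<Rightarrow> nat list \<Rightarrow> (nat\<times>nat\<times>nat \<Rightarrow> real) \<Rightarrow> real^'d::finite \<Rightarrow> real^'d \<Rightarrow> real \<Rightarrow> real" where
  "psi_of M p \<theta> = (\<lambda>u v t. if in_dom M u v t then net_fun p (ls_of p \<theta>) u v t else 0)"

definition Cset :: "'d::finite itself \<Rightarrow> real \<Rightarrow> real \<Rightarrow> real \<Rightarrow> real \<Rightarrow> nat list \<Rightarrow> (nat\<times>nat\<times>nat \<Rightarrow> real) set" where
  "Cset T M B F S p = {\<theta> \<in> PiE (Iset p) (\<lambda>_. {-B..B}). real (net_nnz p (ls_of p \<theta>)) \<le> S \<and>
       (\<forall>u v t. \<bar>psi_of M p \<theta> (u::real^'d) v t\<bar> \<le> F)}"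

lemma nnz_closed:
  "closedin (product_topology (\<lambda>_. euclideanreal) (Iset p))
     {\<theta> \<in> topspace (product_topology (\<lambda>_. euclideanreal) (Iset p)). real (net_nnz p (ls_of p \<theta>)) \<le> S}"
proof (rule closedin_nbhd[OF finite_Iset])
  fix \<theta>0 assume "\<not> real (net_nnz p (ls_of p \<theta>0)) \<le> S"
  define Z where "Z = {k\<in>Iset p. \<theta>0 k \<noteq> 0}"
  define \<delta> where "\<delta> = Min (insert 1 ((\<lambda>k. \<bar>\<theta>0 k\<bar>) ` Z))"
  have fZ: "finite Z" using finite_Iset[of p] by (simp add: Z_def)
  have d0: "\<delta> > 0" unfolding \<delta>_def using fZ by (auto simp: Z_def)
  have dZ: "\<delta> \<le> \<bar>\<theta>0 k\<bar>" if "k \<in> Z" for k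
    unfolding \<delta>_def using fZ that by (intro Min_le) auto
  show "\<exists>\<delta>>0. \<forall>\<theta>\<in>topspace (product_topology (\<lambda>_. euclideanreal) (Iset p)).
          (\<forall>k\<in>Iset p. \<bar>\<theta> k - \<theta>0 k\<bar> < \<delta>) \<longrightarrow> \<not> real (net_nnz p (ls_of p \<theta>)) \<le> S"
  proof (intro exI[of _ \<delta>] conjI d0 ballI impI)
    fix \<theta> assume A: "\<forall>k\<in>Iset p. \<bar>\<theta> k - \<theta>0 k\<bar> < \<delta>"
    have "\<forall>k\<in>Iset p. \<theta>0 k \<noteq> 0 \<longrightarrow> \<theta> k \<noteq> 0"
    proof (intro ballI impI)
      fix k assume k: "k \<in> Iset p" "\<theta>0 k \<noteq> 0"
      then have "\<delta> \<le> \<bar>\<theta>0 k\<bar>" using dZ by (simp add: Z_def)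
      then show "\<theta> k \<noteq> 0" using A k by force
    qed
    from nnz_mono[OF this] show "\<not> real (net_nnz p (ls_of p \<theta>)) \<le> S"
      using \<open>\<not> real (net_nnz p (ls_of p \<theta>0)) \<le> S\<close> by linarith
  qed
qed

lemma F_closed:
  assumes M0: "0 \<le> M" and F0: "0 \<le> F" and q: "length p \<ge> 2"
  shows "closedin (product_topology (\<lambda>_. euclideanreal) (Iset p))
     {\<theta> \<in> topspace (product_topology (\<lambda>_. euclideanreal) (Iset p)). \<forall>u v t. \<bar>psi_of M p \<theta> (u::real^'d::finite) v t\<bar> \<le> F}"
proof (rule closedin_nbhd[OF finite_Iset])
  fix \<theta>0 assume "\<not> (\<forall>u v t. \<bar>psi_of M p \<theta>0 (u::real^'d) v t\<bar> \<le> F)"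
  then obtain u v :: "real^'d" and t where g: "\<bar>psi_of M p \<theta>0 u v t\<bar> > F" by (auto simp: not_le)
  have dom: "in_dom M u v t" using g F0 by (auto simp: psi_of_def split: if_splits)
  define B0 where "B0 = 1 + (\<Sum>k\<in>Iset p. \<bar>\<theta>0 k\<bar>)"
  have kB: "\<bar>\<theta>0 k\<bar> \<le> B0 - 1" if "k \<in> Iset p" for k
    unfolding B0_def using member_le_sum[OF that, of "\<lambda>k. \<bar>\<theta>0 k\<bar>"] finite_Iset[of p] by simp
  have B0: "0 \<le> B0" unfolding B0_def by (simp add: sum_nonneg)
  have pb0: "net_param_bound p (ls_of p \<theta>0) B0" by (rule npb_of) (use kB in force)
  obtain K where K: "K \<ge> 0" and KH: "\<forall>ls' \<delta>. length ls' = length (ls_of p \<theta>0) \<longrightarrow>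
     net_param_bound p ls' B0 \<longrightarrow> pclose p (ls_of p \<theta>0) ls' \<delta> \<longrightarrow> 0 \<le> \<delta> \<longrightarrow>
     (\<forall>u v t. in_dom M u v t \<longrightarrow> \<bar>net_fun p (ls_of p \<theta>0) u v t - net_fun p ls' (u::real^'d) v t\<bar> \<le> K * \<delta>)"
    using net_close[OF B0 M0 q _ pb0] by auto
  define g0 where "g0 = \<bar>psi_of M p \<theta>0 u v t\<bar>"
  define \<delta> where "\<delta> = min 1 ((g0 - F) / (K + 1))"
  have d0: "\<delta> > 0" using g K by (simp add: \<delta>_def g0_def)
  have Kd: "K * \<delta> < g0 - F"
  proof -
    have "K * \<delta> \<le> K * ((g0 - F) / (K + 1))" using K by (intro mult_left_mono) (auto simp: \<delta>_def)
    also have "\<dots> < g0 - F" using K g by (simp add: g0_def field_simps)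
    finally show ?thesis .
  qed
  show "\<exists>\<delta>>0. \<forall>\<theta>\<in>topspace (product_topology (\<lambda>_. euclideanreal) (Iset p)).
          (\<forall>k\<in>Iset p. \<bar>\<theta> k - \<theta>0 k\<bar> < \<delta>) \<longrightarrow> \<not> (\<forall>u v t. \<bar>psi_of M p \<theta> (u::real^'d) v t\<bar> \<le> F)"
  proof (intro exI[of _ \<delta>] conjI d0 ballI impI)
    fix \<theta> assume A: "\<forall>k\<in>Iset p. \<bar>\<theta> k - \<theta>0 k\<bar> < \<delta>"
    have "\<bar>\<theta> k\<bar> \<le> B0" if "k \<in> Iset p" for k
    proof -
      have "\<delta> \<le> 1" unfolding \<delta>_def by simp
      then show ?thesis using A kB[OF that] that by force
    qed
    then have pb: "net_param_bound p (ls_of p \<theta>) B0" by (intro npb_of) blast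
    have pc: "pclose p (ls_of p \<theta>0) (ls_of p \<theta>) \<delta>"
      by (rule pclose_of) (use A in \<open>force simp: abs_minus_commute\<close>)
    have "\<bar>net_fun p (ls_of p \<theta>0) u v t - net_fun p (ls_of p \<theta>) u v t\<bar> \<le> K * \<delta>"
      using KH pb pc d0 dom by simp
    then have "\<bar>psi_of M p \<theta> u v t\<bar> > F"
      using Kd dom unfolding g0_def psi_of_def by auto
    then show "\<not> (\<forall>u v t. \<bar>psi_of M p \<theta> (u::real^'d) v t\<bar> \<le> F)" by (metis not_le)
  qed
qed



lemma Cset_compact:
  assumes M0: "0 \<le> M" and F0: "0 \<le> F" and q: "length p \<ge> 2"
  shows "compactin (product_topology (\<lambda>_. euclideanreal) (Iset p)) (Cset TYPE('d::finite) M B F S p)"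
proof (rule closed_compactin[OF box_compact[of "Iset p" B]])
  show "Cset TYPE('d) M B F S p \<subseteq> PiE (Iset p) (\<lambda>_. {-B..B})" by (auto simp: Cset_def)
  let ?X = "product_topology (\<lambda>_. euclideanreal) (Iset p)"
  have eq: "Cset TYPE('d) M B F S p = PiE (Iset p) (\<lambda>_. {-B..B}) \<inter>
     {\<theta> \<in> topspace ?X. real (net_nnz p (ls_of p \<theta>)) \<le> S} \<inter>
     {\<theta> \<in> topspace ?X. \<forall>u v t. \<bar>psi_of M p \<theta> (u::real^'d) v t\<bar> \<le> F}"
    by (auto simp: Cset_def PiE_iff extensional_def)
  show "closedin ?X (Cset TYPE('d) M B F S p)"
    unfolding eq by (intro closedin_Int box_closed nnz_closed F_closed M0 F0 q)
qed

definition Parch :: "nat \<Rightarrow> nat \<Rightarrow> nat \<Rightarrow> nat list set" where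
  "Parch L N dd = {p. 2 \<le> length p \<and> length p \<le> L+2 \<and> p!0 = 2*dd+1 \<and> p!(length p - 1) = 1 \<and>
      (\<forall>k\<in>{1..<length p - 1}. p!k \<le> N)}"

lemma finite_Parch: "finite (Parch L N dd)"
proof (rule finite_subset[OF _ finite_lists_length_le[of "{..max N (2*dd+1)}" "L+2"]])
  show "Parch L N dd \<subseteq> {xs. set xs \<subseteq> {..max N (2*dd+1)} \<and> length xs \<le> L+2}"
  proof
    fix p assume p: "p \<in> Parch L N dd"
    have "p!k \<le> max N (2*dd+1)" if "k < length p" for k
    proof -
      have "k = 0 \<or> k = length p - 1 \<or> k \<in> {1..<length p - 1}" using that by auto
      moreover have "\<forall>k\<in>{1..<length p - 1}. p!k \<le> N" "p!0 = 2*dd+1" "p!(length p - 1) = 1"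
        using p by (simp_all add: Parch_def)
      ultimately show ?thesis by (elim disjE) (auto simp: le_max_iff_disj)
    qed
    then have "set p \<subseteq> {..max N (2*dd+1)}" by (auto simp: in_set_conv_nth)
    then show "p \<in> {xs. set xs \<subseteq> {..max N (2*dd+1)} \<and> length xs \<le> L+2}" using p by (simp add: Parch_def)
  qed
qed simp

lemma decode_in:
  assumes p: "p \<in> Parch L N CARD('d::finite)" and th: "\<theta> \<in> Cset TYPE('d) M B F S p"
  shows "(psi_of M p \<theta> :: real^'d \<Rightarrow> real^'d \<Rightarrow> real \<Rightarrow> real) \<in> NetClass M L N B F S"
  unfolding NetClass_def
proof (intro CollectI exI conjI)
  let ?ls = "ls_of p \<theta>"
  have "length p \<ge> 2" using p by (simp add: Parch_def)
  then have l1: "length ?ls \<ge> 1" by simp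
  have ne: "?ls \<noteq> []"
  proof
    assume "?ls = []"
    then have "length ?ls = 0" by (simp only: list.size)
    with l1 show False by linarith
  qed
  then show "net_wf p ?ls" using \<open>length p \<ge> 2\<close> by (auto simp: net_wf_def)
  show "p ! 0 = 2 * CARD('d) + 1" using p by (simp add: Parch_def)
  show "p ! length ?ls = 1" using p by (simp add: Parch_def)
  show "net_depth ?ls \<le> L" using p unfolding Parch_def net_depth_def by auto
  show "net_width_le p ?ls N" using p by (simp add: Parch_def net_width_le_def)
  show "net_param_bound p ?ls B" using th by (intro npb_of) (auto simp: Cset_def PiE_iff)
  show "real (net_nnz p ?ls) \<le> S" using th by (simp add: Cset_def)
  show "\<forall>u v t. \<bar>if in_dom M u v t then net_fun p ?ls (u::real^'d) v t else 0\<bar> \<le> F"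
    using th by (simp add: Cset_def psi_of_def)
  show "psi_of M p \<theta> = (\<lambda>u v t. if in_dom M u v t then net_fun p ?ls u v t else 0)"
    by (simp add: psi_of_def)
qed



lemma cont_psi:
  assumes B0: "0 \<le> B" and M0: "0 \<le> M" and q: "length p \<ge> 2"
    and a: "a \<in> Cset TYPE('d::finite) M B F S p" and e: "e > 0"
  shows "\<exists>V. openin (product_topology (\<lambda>_. euclideanreal) (Iset p)) V \<and> a \<in> V \<and>
     (\<forall>b\<in>Cset TYPE('d) M B F S p \<inter> V. op_dist (Psi_op M (psi_of M p b :: real^'d \<Rightarrow> real^'d \<Rightarrow> real \<Rightarrow> real))
         (Psi_op M (psi_of M p a)) < ereal e)"
proof -
  let ?X = "product_topology (\<lambda>_. euclideanreal) (Iset p)"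
  have boxa: "\<forall>k\<in>Iset p. \<bar>a k\<bar> \<le> B" using a by (auto simp: Cset_def PiE_iff)
  have pba: "net_param_bound p (ls_of p a) B" by (rule npb_of[OF boxa])
  obtain K where K: "K \<ge> 0" and KH: "\<forall>ls' \<delta>. length ls' = length (ls_of p a) \<longrightarrow>
     net_param_bound p ls' B \<longrightarrow> pclose p (ls_of p a) ls' \<delta> \<longrightarrow> 0 \<le> \<delta> \<longrightarrow>
     (\<forall>u v t. in_dom M u v t \<longrightarrow> \<bar>net_fun p (ls_of p a) u v t - net_fun p ls' (u::real^'d) v t\<bar> \<le> K * \<delta>)"
    using net_close[OF B0 M0 q _ pba] by auto
  define cm where "cm = cmu TYPE('d) * sqrt (cmu TYPE('d))"
  have cm: "cm \<ge> 0" using cmu_nonneg[where 'd='d] by (simp add: cm_def)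
  define \<delta> where "\<delta> = e / (K * cm + 1)"
  have KC: "K * cm \<ge> 0" using K cm by simp
  have d0: "\<delta> > 0" using e KC by (simp add: \<delta>_def)
  have Kd: "K * \<delta> * cm < e"
  proof -
    have "K * \<delta> * cm = e * (K * cm) / (K * cm + 1)" using KC by (simp add: \<delta>_def field_simps)
    also have "\<dots> < e" using e KC by (simp add: field_simps)
    finally show ?thesis .
  qed
  show ?thesis
  proof (intro exI conjI ballI)
    show "openin ?X {\<theta> \<in> topspace ?X. \<forall>k\<in>Iset p. \<bar>\<theta> k - a k\<bar> < \<delta>}" by (rule box_open[OF finite_Iset])
    show "a \<in> {\<theta> \<in> topspace ?X. \<forall>k\<in>Iset p. \<bar>\<theta> k - a k\<bar> < \<delta>}"
      using a d0 by (auto simp: Cset_def PiE_iff)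
    fix b assume b: "b \<in> Cset TYPE('d) M B F S p \<inter> {\<theta> \<in> topspace ?X. \<forall>k\<in>Iset p. \<bar>\<theta> k - a k\<bar> < \<delta>}"
    have boxb: "\<forall>k\<in>Iset p. \<bar>b k\<bar> \<le> B" using b by (auto simp: Cset_def PiE_iff)
    have pbb: "net_param_bound p (ls_of p b) B" by (rule npb_of[OF boxb])
    have pc: "pclose p (ls_of p a) (ls_of p b) \<delta>"
      by (rule pclose_of) (use b in \<open>force simp: abs_minus_commute\<close>)
    have D: "\<bar>psi_of M p b u v t - psi_of M p a (u::real^'d) v t\<bar> \<le> K * \<delta>" for u v t
    proof (cases "in_dom M u v t")
      case True
      then have "\<bar>net_fun p (ls_of p a) u v t - net_fun p (ls_of p b) (u::real^'d) v t\<bar> \<le> K * \<delta>"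
        using KH pbb pc d0 by simp
      then show ?thesis using True by (simp add: psi_of_def abs_minus_commute)
    next
      case False
      then show ?thesis using K d0 by (simp add: psi_of_def)
    qed
    have Ib: "integrable (lebesgue_on cubeD) (\<lambda>v. psi_of M p b u v (x v))" if "x \<in> Hsp" for u and x :: "real^'d \<Rightarrow> real"
      unfolding psi_of_def
      by (rule psi_int[where F=F]) (use that b in \<open>auto simp: Hsp_def Cset_def psi_of_def\<close>)
    have Ia: "integrable (lebesgue_on cubeD) (\<lambda>v. psi_of M p a u v (x v))" if "x \<in> Hsp" for u and x :: "real^'d \<Rightarrow> real"
      unfolding psi_of_def
      by (rule psi_int[where F=F]) (use that a in \<open>auto simp: Hsp_def Cset_def psi_of_def\<close>)
    have "op_dist (Psi_op M (psi_of M p b :: real^'d \<Rightarrow> real^'d \<Rightarrow> real \<Rightarrow> real)) (Psi_op M (psi_of M p a))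
       \<le> ereal (K * \<delta> * cmu TYPE('d) * sqrt (cmu TYPE('d)))"
      by (rule opdist_bound[OF Ib Ia D]) (use K d0 in simp_all)
    also have "\<dots> < ereal e" using Kd by (simp add: cm_def mult.assoc)
    finally show "op_dist (Psi_op M (psi_of M p b :: real^'d \<Rightarrow> real^'d \<Rightarrow> real \<Rightarrow> real)) (Psi_op M (psi_of M p a)) < ereal e" .
  qed
qed



lemma encode:
  assumes B0: "0 \<le> B" and M0: "0 \<le> M"
    and psi: "\<psi> \<in> (NetClass M L N B F S :: (real^'d::finite \<Rightarrow> real^'d \<Rightarrow> real \<Rightarrow> real) set)"
  shows "\<exists>p\<in>Parch L N CARD('d). \<exists>\<theta>\<in>Cset TYPE('d) M B F S p. \<psi> = psi_of M p \<theta>"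
proof -
  obtain p ls where wf: "net_wf p ls" and p0: "p ! 0 = 2 * CARD('d) + 1" and pl: "p ! length ls = 1"
    and dep: "net_depth ls \<le> L" and wid: "net_width_le p ls N" and pb: "net_param_bound p ls B"
    and nz: "real (net_nnz p ls) \<le> S"
    and Fb: "\<forall>u v t. \<bar>if in_dom M u v t then net_fun p ls (u::real^'d) v t else 0\<bar> \<le> F"
    and pe: "\<psi> = (\<lambda>u v t. if in_dom M u v t then net_fun p ls u v t else 0)"
    using psi unfolding NetClass_def by blast
  have len: "length p = length ls + 1" "ls \<noteq> []" using wf by (auto simp: net_wf_def)
  then have q: "length p \<ge> 2" and ll: "length ls = length p - 1" by (cases ls; simp)+
  define \<theta> where "\<theta> = restrict (\<lambda>(l,i,j). if j < p!l then fst (ls!l) i j else snd (ls!l) i) (Iset p)"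
  have fst_eq: "fst (ls_of p \<theta> ! l) i j = fst (ls!l) i j" if "l < length ls" "i < p!(l+1)" "j < p!l" for l i j
    using that ll by (simp add: nth_ls_of \<theta>_def Iset_mem)
  have snd_eq: "snd (ls_of p \<theta> ! l) i = snd (ls!l) i" if "l < length ls" "i < p!(l+1)" for l i
    using that ll by (simp add: nth_ls_of \<theta>_def Iset_mem)
  have box: "\<theta> k \<in> {-B..B}" if "k \<in> Iset p" for k
  proof -
    obtain l i j where k: "k = (l,i,j)" by (cases k) auto
    have l: "l < length ls" "i < p!(l+1)" "j \<le> p!l" using that ll by (auto simp: k Iset_mem)
    show ?thesis
    proof (cases "j < p!l")
      case True
      then have "\<bar>fst (ls!l) i j\<bar> \<le> B" using pb l unfolding net_param_bound_def by blast
      then show ?thesis using True that by (auto simp: k \<theta>_def)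
    next
      case False
      then have "\<bar>snd (ls!l) i\<bar> \<le> B" using pb l unfolding net_param_bound_def by blast
      then show ?thesis using False that by (auto simp: k \<theta>_def)
    qed
  qed
  have thPi: "\<theta> \<in> PiE (Iset p) (\<lambda>_. {-B..B})" unfolding \<theta>_def
    using box by (auto simp: \<theta>_def restrict_PiE_iff)
  have pc: "pclose p ls (ls_of p \<theta>) 0"
    unfolding pclose_def using fst_eq snd_eq by simp
  have pbt: "net_param_bound p (ls_of p \<theta>) B"
    by (rule npb_of) (use box in \<open>force simp: abs_le_iff\<close>)
  obtain K where K: "K \<ge> 0" and KH: "\<forall>ls' \<delta>. length ls' = length ls \<longrightarrow>
     net_param_bound p ls' B \<longrightarrow> pclose p ls ls' \<delta> \<longrightarrow> 0 \<le> \<delta> \<longrightarrow>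
     (\<forall>u v t. in_dom M u v t \<longrightarrow> \<bar>net_fun p ls u v t - net_fun p ls' (u::real^'d) v t\<bar> \<le> K * \<delta>)"
    using net_close[OF B0 M0 q ll pb] by auto
  have neq: "net_fun p ls u v t = net_fun p (ls_of p \<theta>) (u::real^'d) v t" if "in_dom M u v t" for u v t
    using KH[rule_format, of "ls_of p \<theta>" 0 u v t] that ll pbt pc by simp
  have psi_eq: "\<psi> = psi_of M p \<theta>"
    unfolding pe psi_of_def using neq by (intro ext) auto
  have nnz_eq: "net_nnz p (ls_of p \<theta>) = net_nnz p ls"
  proof -
    have s1: "{(l,i,j). l < length (ls_of p \<theta>) \<and> i < p!(l+1) \<and> j < p!l \<and> fst (ls_of p \<theta> ! l) i j \<noteq> 0}
        = {(l,i,j). l < length ls \<and> i < p!(l+1) \<and> j < p!l \<and> fst (ls ! l) i j \<noteq> 0}"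
      using fst_eq ll by auto
    have s2: "{(l,i). l < length (ls_of p \<theta>) \<and> i < p!(l+1) \<and> snd (ls_of p \<theta> ! l) i \<noteq> 0}
        = {(l,i). l < length ls \<and> i < p!(l+1) \<and> snd (ls ! l) i \<noteq> 0}"
      using snd_eq ll by auto
    show ?thesis unfolding net_nnz_def s1 s2 ..
  qed
  have Fb2: "\<forall>u v t. \<bar>psi_of M p \<theta> (u::real^'d) v t\<bar> \<le> F"
    using Fb unfolding psi_eq[symmetric] pe by simp
  have "\<theta> \<in> Cset TYPE('d) M B F S p"
    unfolding Cset_def using thPi nz nnz_eq Fb2 by simp
  moreover have "p \<in> Parch L N CARD('d)"
    unfolding Parch_def using q p0 pl ll dep wid
    by (auto simp: net_depth_def net_width_le_def)
  ultimately show ?thesis using psi_eq by blast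
qed

theorem lemmaB1:
  fixes M B F S :: real and L N :: nat
  assumes "M > 0" and "B \<ge> 1" and "F \<ge> 1" and "S > 0"
  defines "G \<equiv> (\<lambda>\<psi>. Psi_op M \<psi>) ` (NetClass M L N B F S :: (real^'d::finite \<Rightarrow> real^'d \<Rightarrow> real \<Rightarrow> real) set)"
  shows "(\<forall>\<Psi>\<in>G. \<forall>x\<in>Hsp. esssup_norm x > ereal M \<longrightarrow> \<Psi> x = (\<lambda>u. 0)) \<and> dcompact G op_dist"
proof
  show "\<forall>\<Psi>\<in>G. \<forall>x\<in>Hsp. esssup_norm x > ereal M \<longrightarrow> \<Psi> x = (\<lambda>u. 0)"
  proof (intro ballI impI)
    fix \<Psi> and x :: "real^'d \<Rightarrow> real" assume "\<Psi> \<in> G" and "esssup_norm x > ereal M"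
    then obtain \<psi> where "\<Psi> = Psi_op M \<psi>" unfolding G_def by blast
    moreover have "\<not> esssup_norm x \<le> ereal M" using \<open>esssup_norm x > ereal M\<close> by simp
    ultimately show "\<Psi> x = (\<lambda>u. 0)" by (simp add: Psi_op_def)
  qed
  have B0: "0 \<le> B" and M0: "0 \<le> M" and F0: "0 \<le> F" using assms by auto
  have NC: "(NetClass M L N B F S :: (real^'d \<Rightarrow> real^'d \<Rightarrow> real \<Rightarrow> real) set)
      = (\<Union>p\<in>Parch L N CARD('d). psi_of M p ` Cset TYPE('d) M B F S p)"
  proof
    show "(NetClass M L N B F S :: (real^'d \<Rightarrow> real^'d \<Rightarrow> real \<Rightarrow> real) set)
      \<subseteq> (\<Union>p\<in>Parch L N CARD('d). psi_of M p ` Cset TYPE('d) M B F S p)"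
    proof
      fix \<psi> assume "\<psi> \<in> (NetClass M L N B F S :: (real^'d \<Rightarrow> real^'d \<Rightarrow> real \<Rightarrow> real) set)"
      from encode[OF B0 M0 this] obtain p \<theta> where pt: "p \<in> Parch L N CARD('d)" "\<theta> \<in> Cset TYPE('d) M B F S p" "\<psi> = psi_of M p \<theta>"
        by blast
      show "\<psi> \<in> (\<Union>p\<in>Parch L N CARD('d). psi_of M p ` Cset TYPE('d) M B F S p)"
        unfolding pt(3) using pt(1) imageI[OF pt(2), of "psi_of M p"] by blast
    qed
    show "(\<Union>p\<in>Parch L N CARD('d). psi_of M p ` Cset TYPE('d) M B F S p)
      \<subseteq> (NetClass M L N B F S :: (real^'d \<Rightarrow> real^'d \<Rightarrow> real \<Rightarrow> real) set)"
    proof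
      fix \<psi> :: "real^'d \<Rightarrow> real^'d \<Rightarrow> real \<Rightarrow> real" assume "\<psi> \<in> (\<Union>p\<in>Parch L N CARD('d). psi_of M p ` Cset TYPE('d) M B F S p)"
      then obtain p \<theta> where "p \<in> Parch L N CARD('d)" "\<theta> \<in> Cset TYPE('d) M B F S p" "\<psi> = psi_of M p \<theta>"
        by blast
      then show "\<psi> \<in> (NetClass M L N B F S :: (real^'d \<Rightarrow> real^'d \<Rightarrow> real \<Rightarrow> real) set)"
        using decode_in by simp
    qed
  qed
  have GU: "G = (\<Union>p\<in>Parch L N CARD('d). (\<lambda>\<theta>. Psi_op M (psi_of M p \<theta> :: real^'d \<Rightarrow> real^'d \<Rightarrow> real \<Rightarrow> real)) ` Cset TYPE('d) M B F S p)"
    unfolding G_def NC by (simp add: image_UN image_image)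
  show "dcompact G op_dist"
  proof (rule dcompact_finite_union[OF finite_Parch GU])
    fix p \<U> assume p: "p \<in> Parch L N CARD('d)" and Uo: "\<forall>U\<in>\<U>. dopen_in G op_dist U" and cov: "G \<subseteq> \<Union>\<U>"
    have q: "length p \<ge> 2" using p by (simp add: Parch_def)
    show "\<exists>\<V>\<subseteq>\<U>. finite \<V> \<and> (\<lambda>\<theta>. Psi_op M (psi_of M p \<theta> :: real^'d \<Rightarrow> real^'d \<Rightarrow> real \<Rightarrow> real)) ` Cset TYPE('d) M B F S p \<subseteq> \<Union>\<V>"
    proof (rule dcompact_cover_image[OF Cset_compact[OF M0 F0 q] _ Uo _ cov])
      show "(\<lambda>\<theta>. Psi_op M (psi_of M p \<theta> :: real^'d \<Rightarrow> real^'d \<Rightarrow> real \<Rightarrow> real)) ` Cset TYPE('d) M B F S p \<subseteq> G"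
        unfolding GU using p by (rule UN_upper)
      show "\<forall>a\<in>Cset TYPE('d) M B F S p. \<forall>e>0. \<exists>V. openin (product_topology (\<lambda>_. euclideanreal) (Iset p)) V \<and> a \<in> V \<and>
          (\<forall>b\<in>Cset TYPE('d) M B F S p \<inter> V. op_dist (Psi_op M (psi_of M p b :: real^'d \<Rightarrow> real^'d \<Rightarrow> real \<Rightarrow> real)) (Psi_op M (psi_of M p a)) < ereal e)"
        by (intro ballI allI impI cont_psi[OF B0 M0 q])
    qed
  qed
qed

end
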